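(* Let $a_1,\dots,a_n\in\mathbb{R}^d$ be the rows of $A$, let $k\ge1$ and $0<\epsilon<1$. Let $P$ be an $r$-dimensional linear subspace of $\mathbb{R}^d$ such that for all linear subspaces $W$ of dimension at most $k$, $$\sum_i\mathrm{dist}(a_i,P)-\sum_i\mathrm{dist}(a_i,P+W)\le\frac{\epsilon^2}{80}\mathrm{SubApx}_{k,1}(A).$$ Let $B\in\mathbb{R}^{d\times r}$ be an orthonormal basis for $P$ and set $\epsilon_c=\epsilon^2/6$. For each $i$ let $a_i^B\in\mathbb{R}^r$ satisfy $\mathrm{dist}(a_i,Ba_i^B)\le(1+\epsilon_c)\mathrm{dist}(a_i,P)$ and let $\mathrm{apx}_i$ satisfy $(1-\epsilon_c)\mathrm{dist}(a_i,P)\le\mathrm{apx}_i\le(1+\epsilon_c)\mathrm{dist}(a_i,P)$. Then for every shape $S$ lying in a $k$-dimensional subspace, $$\sum_i\sqrt{\mathrm{dist}(Ba_i^B,S)^2+\mathrm{apx}_i^2}=(1\pm5\epsilon)\sum_i\mathrm{dist}(a_i,S).$$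
   Context: $\mathrm{dist}(x,S)=\inf_{s\in S}\|x-s\|_2$. $\mathrm{SubApx}_{k,1}(A)=\min\{\sum_{i=1}^n\mathrm{dist}(a_i,Q): Q\text{ a linear subspace of }\mathbb{R}^d,\ \dim Q\le k\}$. $P+W$ is the span of $P\cup W$. A "shape lying in a $k$-dimensional subspace" is any nonempty set $S\subseteq\mathbb{R}^d$ contained in a linear subspace of dimension at most $k$. $x=(1\pm\epsilon)y$ means $(1-\epsilon)y\le x\le(1+\epsilon)y$. *)

theory Defs
  imports "HOL-Analysis.Analysis"
begin

definition SubApx :: "nat \<Rightarrow> (nat \<Rightarrow> 'a::euclidean_space) \<Rightarrow> nat \<Rightarrow> real" where
  "SubApx k a n = Inf {(\<Sum>i<n. infdist (a i) Q) | Q. subspace Q \<and> dim Q \<le> k}"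

definition shape_in_subspace :: "nat \<Rightarrow> 'a::euclidean_space set \<Rightarrow> bool" where
  "shape_in_subspace k S \<longleftrightarrow> S \<noteq> {} \<and> (\<exists>Q. subspace Q \<and> dim Q \<le> k \<and> S \<subseteq> Q)"

end

theory Submission imports Defs begin

lemma infdist_closure_eq: "infdist x (closure S) = infdist x S"
  by (simp add: infdist_eq_setdist)

lemma infdist_decomp:
  fixes V :: "'a::euclidean_space set"
  assumes "subspace V" "y \<in> V" "\<And>w. w \<in> V \<Longrightarrow> orthogonal z w"
  shows "infdist (y + z) V = norm z"
proof (rule antisym)
  show "infdist (y + z) V \<le> norm z" using infdist_le[OF assms(2), of "y+z"] by (simp add: dist_norm)
next
  have "norm z \<le> dist (y+z) v" if "v \<in> V" for v
  proof -
    have "y - v \<in> V" using assms that by (simp add: subspace_diff)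
    hence "orthogonal z (y - v)" using assms(3) by blast
    hence "(norm (z + (y - v)))\<^sup>2 = (norm z)\<^sup>2 + (norm (y-v))\<^sup>2" by (rule norm_add_Pythagorean)
    hence "(norm z)\<^sup>2 \<le> (norm (z + (y - v)))\<^sup>2" by simp
    hence "norm z \<le> norm (z + (y - v))" using power2_le_imp_le by fastforce
    thus ?thesis by (simp add: dist_norm algebra_simps)
  qed
  moreover have "V \<noteq> {}" using assms(2) by blast
  ultimately show "norm z \<le> infdist (y + z) V"
    by (simp add: infdist_notempty cINF_greatest)
qed

lemma sqrt_diff_bound:
  fixes x y x' y' :: real
  shows "sqrt (x\<^sup>2 + y\<^sup>2) \<le> sqrt (x'\<^sup>2 + y'\<^sup>2) + \<bar>x - x'\<bar> + \<bar>y - y'\<bar>"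
proof -
  have "sqrt (x\<^sup>2 + y\<^sup>2) = sqrt ((x' + (x - x'))\<^sup>2 + (y' + (y - y'))\<^sup>2)" by simp
  also have "\<dots> \<le> sqrt (x'\<^sup>2 + y'\<^sup>2) + sqrt ((x - x')\<^sup>2 + (y - y')\<^sup>2)"
    by (rule real_sqrt_sum_squares_triangle_ineq)
  also have "\<dots> \<le> sqrt (x'\<^sup>2 + y'\<^sup>2) + (\<bar>x - x'\<bar> + \<bar>y - y'\<bar>)"
    using sqrt_sum_squares_le_sum_abs by simp
  finally show ?thesis by simp
qed

lemma point_bound:
  fixes a b :: "'a::euclidean_space" and P Q S :: "'a set" and \<epsilon> apx :: real
  assumes P: "subspace P" and Q: "subspace Q" and SQ: "S \<subseteq> Q" and Sne: "S \<noteq> {}"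
    and eps: "0 < \<epsilon>" "\<epsilon> < 1"
    and bP: "b \<in> P"
    and ab: "dist a b \<le> (1 + \<epsilon>\<^sup>2 / 6) * infdist a P"
    and apx1: "(1 - \<epsilon>\<^sup>2 / 6) * infdist a P \<le> apx"
    and apx2: "apx \<le> (1 + \<epsilon>\<^sup>2 / 6) * infdist a P"
  shows "\<bar>sqrt ((infdist b S)\<^sup>2 + apx\<^sup>2) - infdist a S\<bar>
     \<le> 2 * \<epsilon> * infdist a P + 2 * (infdist a P - infdist a (span (P \<union> Q))) / \<epsilon>"
proof -
  define c where "c = \<epsilon>\<^sup>2 / 6"
  define PQ where "PQ = span (P \<union> Q)"
  have sP: "span P = P" using P by (simp add: span_eq_iff)
  obtain p z where p: "p \<in> P" and zo: "\<And>w. w \<in> P \<Longrightarrow> orthogonal z w" and apz: "a = p + z"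
    using orthogonal_subspace_decomp_exists[of P a] sP by metis
  obtain a' w where a': "a' \<in> PQ" and wo: "\<And>u. u \<in> PQ \<Longrightarrow> orthogonal w u" and aaw: "a = a' + w"
    using orthogonal_subspace_decomp_exists[of "P \<union> Q" a] unfolding PQ_def by metis
  have sPi: "subspace PQ" unfolding PQ_def by simp
  have PPi: "P \<subseteq> PQ" "Q \<subseteq> PQ" unfolding PQ_def by (auto intro: span_base)
  define d where "d = infdist a P"
  define g where "g = infdist a PQ"
  have d: "d = norm z" unfolding d_def apz by (rule infdist_decomp[OF P p zo])
  have g: "g = norm w" unfolding g_def aaw by (rule infdist_decomp[OF sPi a' wo])
  define e where "e = norm (a' - p)"
  have "a' - p \<in> PQ" using a' p PPi sPi by (auto intro: subspace_diff)
  hence "orthogonal (a' - p) w" using wo orthogonal_commute by blast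
  hence "(norm ((a' - p) + w))\<^sup>2 = e\<^sup>2 + g\<^sup>2" unfolding e_def g by (rule norm_add_Pythagorean)
  moreover have "(a' - p) + w = z" using apz aaw by (simp add: algebra_simps)
  ultimately have deg: "d\<^sup>2 = e\<^sup>2 + g\<^sup>2" using d by simp
  have d0: "d \<ge> 0" "g \<ge> 0" "e \<ge> 0" using d g e_def by auto
  have "g\<^sup>2 \<le> d\<^sup>2" using deg zero_le_power2[of e] by linarith
  hence gd: "g \<le> d" using d0(1) by (rule power2_le_imp_le)
  define \<delta> where "\<delta> = d - g"
  define \<beta> where "\<beta> = norm (p - b)"
  have "p - b \<in> P" using p bP P by (simp add: subspace_diff)
  hence "orthogonal z (p - b)" using zo by blast
  hence "(norm (z + (p - b)))\<^sup>2 = d\<^sup>2 + \<beta>\<^sup>2" unfolding d \<beta>_def by (rule norm_add_Pythagorean)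
  moreover have "z + (p - b) = a - b" using apz by simp
  ultimately have abeq: "(dist a b)\<^sup>2 = d\<^sup>2 + \<beta>\<^sup>2" by (simp add: dist_norm)
  have "(dist a b)\<^sup>2 \<le> ((1 + c) * d)\<^sup>2" using ab unfolding c_def d_def
    by (simp add: power_mono)
  hence "\<beta>\<^sup>2 \<le> ((1+c)\<^sup>2 - 1) * d\<^sup>2" proof -
    have "((1 + c) * d)\<^sup>2 = d\<^sup>2 * (1+c)\<^sup>2" by (simp add: power_mult_distrib)
    thus ?thesis using abeq \<open>(dist a b)\<^sup>2 \<le> ((1 + c) * d)\<^sup>2\<close> by (simp add: algebra_simps)
  qed
  moreover have "(1+c)\<^sup>2 - 1 \<le> \<epsilon>\<^sup>2"
  proof -
    have "c \<le> \<epsilon>\<^sup>2/6" "c \<ge> 0" "\<epsilon>\<^sup>2 < 1" using eps by (auto simp: c_def power_less_one_iff)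
    hence "c \<le> 1" by simp
    hence "c * c \<le> c * 1" using \<open>c \<ge> 0\<close> by (intro mult_left_mono) auto
    hence "c * c \<le> \<epsilon>\<^sup>2 / 6" using \<open>c \<le> \<epsilon>\<^sup>2/6\<close> by simp
    moreover have "(1+c)\<^sup>2 - 1 = c*c + 2*c" by (simp add: power2_eq_square algebra_simps)
    ultimately show ?thesis using \<open>c \<le> \<epsilon>\<^sup>2/6\<close> zero_le_power2[of \<epsilon>] by linarith
  qed
  ultimately have "\<beta>\<^sup>2 \<le> \<epsilon>\<^sup>2 * d\<^sup>2"
    using mult_right_mono[of "(1+c)\<^sup>2 - 1" "\<epsilon>\<^sup>2" "d\<^sup>2"] by simp
  hence "\<beta>\<^sup>2 \<le> (\<epsilon> * d)\<^sup>2" by (simp add: power_mult_distrib)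
  moreover have "0 \<le> \<epsilon> * d" using eps(1) d0(1) by simp
  ultimately have beta: "\<beta> \<le> \<epsilon> * d" by (rule power2_le_imp_le)
  have ebound: "e \<le> \<epsilon> * d / 2 + \<delta> / \<epsilon>"
  proof -
    have "e\<^sup>2 = \<delta> * (d + g)" using deg unfolding \<delta>_def power2_eq_square by (simp add: algebra_simps)
    also have "\<dots> \<le> 2 * d * \<delta>"
    proof -
      have "0 \<le> \<delta>" "d + g \<le> 2 * d" using gd unfolding \<delta>_def by simp_all
      hence "\<delta> * (d + g) \<le> \<delta> * (2 * d)" by (intro mult_left_mono) 
      thus ?thesis by (simp add: algebra_simps)
    qed
    also have "\<dots> \<le> (\<epsilon> * d / 2 + \<delta> / \<epsilon>)\<^sup>2"
    proof -
      have "0 \<le> (\<epsilon> * d / 2 - \<delta> / \<epsilon>)\<^sup>2" by simp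
      moreover have "(\<epsilon> * d / 2 + \<delta> / \<epsilon>)\<^sup>2 = (\<epsilon> * d / 2 - \<delta> / \<epsilon>)\<^sup>2 + 2 * d * \<delta>"
        using eps by (simp add: power2_eq_square field_simps)
      ultimately show ?thesis by simp
    qed
    finally have "e\<^sup>2 \<le> (\<epsilon> * d / 2 + \<delta> / \<epsilon>)\<^sup>2" .
    moreover have "0 \<le> \<epsilon> * d / 2 + \<delta> / \<epsilon>"
    proof -
      have "0 \<le> \<epsilon> * d" using eps(1) d0(1) by simp
      moreover have "0 \<le> \<delta>" using gd unfolding \<delta>_def by simp
      hence "0 \<le> \<delta> / \<epsilon>" using eps(1) by simp
      ultimately show ?thesis by simp
    qed
    ultimately show ?thesis by (rule power2_le_imp_le)
  qed
  have apxd: "\<bar>apx - g\<bar> \<le> c * d + \<delta>"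
    using apx1 apx2 gd d0 unfolding c_def d_def \<delta>_def by (auto simp: algebra_simps abs_if)
  have ptw: "\<bar>sqrt ((dist b s)\<^sup>2 + apx\<^sup>2) - dist a s\<bar> \<le> \<beta> + e + c * d + \<delta>" if sPi': "s \<in> PQ" for s
  proof -
    have "a' - s \<in> PQ" using a' sPi' sPi by (simp add: subspace_diff)
    hence "orthogonal (a' - s) w" using wo orthogonal_commute by blast
    hence "(norm ((a' - s) + w))\<^sup>2 = (dist a' s)\<^sup>2 + g\<^sup>2" unfolding g by (simp add: norm_add_Pythagorean dist_norm)
    moreover have "(a' - s) + w = a - s" using aaw by simp
    ultimately have "(dist a s)\<^sup>2 = (dist a' s)\<^sup>2 + g\<^sup>2" by (simp add: dist_norm)
    hence das: "dist a s = sqrt ((dist a' s)\<^sup>2 + g\<^sup>2)" by (metis real_sqrt_abs abs_of_nonneg zero_le_dist)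
    have "\<bar>dist b s - dist a' s\<bar> \<le> dist b a'" using abs_dist_diff_le[of b s a'] by (simp add: dist_commute)
    also have "dist b a' \<le> \<beta> + e" unfolding \<beta>_def e_def using dist_triangle[of b a' p]
      by (simp add: dist_norm norm_minus_commute)
    finally have bx: "\<bar>dist b s - dist a' s\<bar> \<le> \<beta> + e" .
    have h1: "sqrt ((dist b s)\<^sup>2 + apx\<^sup>2) \<le> sqrt ((dist a' s)\<^sup>2 + g\<^sup>2) + \<bar>dist b s - dist a' s\<bar> + \<bar>apx - g\<bar>"
      by (rule sqrt_diff_bound)
    have h2: "sqrt ((dist a' s)\<^sup>2 + g\<^sup>2) \<le> sqrt ((dist b s)\<^sup>2 + apx\<^sup>2) + \<bar>dist a' s - dist b s\<bar> + \<bar>g - apx\<bar>"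
      by (rule sqrt_diff_bound)
    have "\<bar>dist a' s - dist b s\<bar> = \<bar>dist b s - dist a' s\<bar>" "\<bar>g - apx\<bar> = \<bar>apx - g\<bar>"
      by (simp_all add: abs_minus_commute)
    hence "sqrt ((dist a' s)\<^sup>2 + g\<^sup>2) \<le> sqrt ((dist b s)\<^sup>2 + apx\<^sup>2) + \<bar>dist b s - dist a' s\<bar> + \<bar>apx - g\<bar>"
      using h2 by simp
    thus ?thesis unfolding das using h1 bx apxd by linarith
  qed
  have clS: "closure S \<subseteq> PQ" using SQ PPi Q by (meson closed_subspace closure_minimal order_trans)
  have clne: "closure S \<noteq> {}" using Sne by simp
  obtain s1 where s1: "s1 \<in> closure S" "infdist a S = dist a s1"
    using infdist_attains_inf[OF closed_closure clne, of a] infdist_closure_eq by metis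
  obtain s0 where s0: "s0 \<in> closure S" "infdist b S = dist b s0"
    using infdist_attains_inf[OF closed_closure clne, of b] infdist_closure_eq by metis
  have "infdist b S \<le> dist b s1" using infdist_le[OF s1(1), of b] infdist_closure_eq by metis
  hence up: "sqrt ((infdist b S)\<^sup>2 + apx\<^sup>2) \<le> infdist a S + (\<beta> + e + c * d + \<delta>)"
  proof -
    have "(infdist b S)\<^sup>2 \<le> (dist b s1)\<^sup>2" using \<open>infdist b S \<le> dist b s1\<close> infdist_nonneg[of b S]
      by (intro power_mono) auto
    hence m: "sqrt ((infdist b S)\<^sup>2 + apx\<^sup>2) \<le> sqrt ((dist b s1)\<^sup>2 + apx\<^sup>2)" by simp
    have "s1 \<in> PQ" using s1 clS by blast
    hence "\<bar>sqrt ((dist b s1)\<^sup>2 + apx\<^sup>2) - dist a s1\<bar> \<le> \<beta> + e + c * d + \<delta>" by (rule ptw)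
    thus ?thesis using m s1(2) by linarith
  qed
  have "infdist a S \<le> dist a s0" using infdist_le[OF s0(1), of a] infdist_closure_eq by metis
  hence lo: "infdist a S \<le> sqrt ((infdist b S)\<^sup>2 + apx\<^sup>2) + (\<beta> + e + c * d + \<delta>)"
  proof -
    have "s0 \<in> PQ" using s0 clS by blast
    hence "\<bar>sqrt ((dist b s0)\<^sup>2 + apx\<^sup>2) - dist a s0\<bar> \<le> \<beta> + e + c * d + \<delta>" by (rule ptw)
    thus ?thesis unfolding s0(2) using \<open>infdist a S \<le> dist a s0\<close> by linarith
  qed
  have "\<beta> + e + c * d + \<delta> \<le> 2 * \<epsilon> * d + 2 * \<delta> / \<epsilon>"
  proof -
    have "c \<le> \<epsilon> / 6" using eps unfolding c_def power2_eq_square by (simp add: mult_left_le)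
    hence "c * d \<le> \<epsilon> / 6 * d" using mult_right_mono d0(1) by blast
    hence cd: "c * d \<le> (\<epsilon> * d) / 6" by simp
    have "\<delta> \<le> \<delta> / \<epsilon>" using eps gd unfolding \<delta>_def by (simp add: le_divide_eq mult_left_le)
    moreover have "0 \<le> \<epsilon> * d" using eps(1) d0(1) by simp
    ultimately show ?thesis using beta ebound cd by linarith
  qed
  thus ?thesis using up lo unfolding d_def \<delta>_def g_def PQ_def by (simp add: abs_le_iff)
qed

theorem theorem4:
  fixes a :: "nat \<Rightarrow> real^'d" and n k :: nat and \<epsilon> :: real
    and P :: "(real^'d) set" and B :: "real^'r^'d"
    and aB :: "nat \<Rightarrow> real^'r" and apx :: "nat \<Rightarrow> real"
  assumes k: "k \<ge> 1"
    and eps: "0 < \<epsilon>" "\<epsilon> < 1"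
    and P: "subspace P" "dim P = CARD('r)"
    and good: "\<And>W. subspace W \<Longrightarrow> dim W \<le> k \<Longrightarrow>
        (\<Sum>i<n. infdist (a i) P) - (\<Sum>i<n. infdist (a i) (span (P \<union> W)))
          \<le> \<epsilon>\<^sup>2 / 80 * SubApx k a n"
    and B_orth: "transpose B ** B = mat 1"
    and B_span: "range (\<lambda>x. B *v x) = P"
    and aB: "\<And>i. i < n \<Longrightarrow> dist (a i) (B *v aB i) \<le> (1 + \<epsilon>\<^sup>2 / 6) * infdist (a i) P"
    and apx: "\<And>i. i < n \<Longrightarrow> (1 - \<epsilon>\<^sup>2 / 6) * infdist (a i) P \<le> apx i"
             "\<And>i. i < n \<Longrightarrow> apx i \<le> (1 + \<epsilon>\<^sup>2 / 6) * infdist (a i) P"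
  shows "\<forall>S. shape_in_subspace k S \<longrightarrow>
      (1 - 5 * \<epsilon>) * (\<Sum>i<n. infdist (a i) S)
        \<le> (\<Sum>i<n. sqrt ((infdist (B *v aB i) S)\<^sup>2 + (apx i)\<^sup>2)) \<and>
      (\<Sum>i<n. sqrt ((infdist (B *v aB i) S)\<^sup>2 + (apx i)\<^sup>2))
        \<le> (1 + 5 * \<epsilon>) * (\<Sum>i<n. infdist (a i) S)"
proof (intro allI impI)
  fix S :: "(real^'d) set"
  assume sh: "shape_in_subspace k S"
  then obtain Q where Q: "subspace Q" "dim Q \<le> k" "S \<subseteq> Q" and Sne: "S \<noteq> {}"
    unfolding shape_in_subspace_def by blast
  define X where "X i = sqrt ((infdist (B *v aB i) S)\<^sup>2 + (apx i)\<^sup>2)" for i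
  define Y where "Y i = infdist (a i) S" for i
  define d where "d i = infdist (a i) P" for i
  define g where "g i = infdist (a i) (span (P \<union> Q))" for i
  define D where "D = (\<Sum>i<n. Y i)"
  have bP: "B *v aB i \<in> P" for i using B_span by blast
  have err: "\<bar>X i - Y i\<bar> \<le> 2 * \<epsilon> * d i + 2 * (d i - g i) / \<epsilon>" if "i < n" for i
    unfolding X_def Y_def d_def g_def
    by (rule point_bound[OF P(1) Q(1) Q(3) Sne eps bP aB[OF that] apx(1)[OF that] apx(2)[OF that]])
  have gY: "g i \<le> Y i" for i
  proof -
    have "S \<subseteq> span (P \<union> Q)" using Q(3) by (meson le_sup_iff order_trans span_superset)
    thus ?thesis unfolding g_def Y_def using infdist_mono Sne by blast
  qed
  have D0: "0 \<le> D" unfolding D_def Y_def by (simp add: sum_nonneg infdist_nonneg)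
  have "SubApx k a n \<le> (\<Sum>i<n. infdist (a i) Q)"
    unfolding SubApx_def
  proof (rule cInf_lower)
    show "(\<Sum>i<n. infdist (a i) Q) \<in> {\<Sum>i<n. infdist (a i) Q |Q. subspace Q \<and> dim Q \<le> k}"
      using Q by blast
    show "bdd_below {\<Sum>i<n. infdist (a i) Q |Q. subspace Q \<and> dim Q \<le> k}"
      by (rule bdd_belowI[of _ 0]) (auto simp: sum_nonneg infdist_nonneg)
  qed
  also have "\<dots> \<le> D" unfolding D_def Y_def
    by (rule sum_mono) (use infdist_mono Q(3) Sne in blast)
  finally have SD: "SubApx k a n \<le> D" .
  have "(\<Sum>i<n. d i) - (\<Sum>i<n. g i) \<le> \<epsilon>\<^sup>2 / 80 * SubApx k a n"
    unfolding d_def g_def by (rule good[OF Q(1) Q(2)])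
  also have "\<dots> \<le> \<epsilon>\<^sup>2 / 80 * D" using SD by (simp add: mult_left_mono)
  finally have dg: "(\<Sum>i<n. d i) - (\<Sum>i<n. g i) \<le> \<epsilon>\<^sup>2 / 80 * D" .
  have gD: "(\<Sum>i<n. g i) \<le> D" unfolding D_def by (rule sum_mono) (rule gY)
  have e2: "\<epsilon>\<^sup>2 / 80 * D \<le> D"
  proof -
    have "\<epsilon>\<^sup>2 \<le> 1" using eps by (simp add: power_le_one)
    hence "\<epsilon>\<^sup>2 / 80 \<le> 1" by simp
    thus ?thesis using D0 mult_right_mono[of "\<epsilon>\<^sup>2 / 80" 1 D] by simp
  qed
  have sd: "(\<Sum>i<n. d i) \<le> 2 * D" using dg gD e2 by linarith
  have "\<bar>(\<Sum>i<n. X i) - D\<bar> = \<bar>\<Sum>i<n. X i - Y i\<bar>" unfolding D_def by (simp add: sum_subtractf)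
  also have "\<dots> \<le> (\<Sum>i<n. \<bar>X i - Y i\<bar>)" by (rule sum_abs)
  also have "\<dots> \<le> (\<Sum>i<n. 2 * \<epsilon> * d i + 2 * (d i - g i) / \<epsilon>)" by (rule sum_mono) (use err in simp)
  also have "\<dots> = 2 * \<epsilon> * (\<Sum>i<n. d i) + 2 / \<epsilon> * ((\<Sum>i<n. d i) - (\<Sum>i<n. g i))"
  proof -
    have "(\<Sum>i<n. 2 * \<epsilon> * d i + 2 * (d i - g i) / \<epsilon>) = (\<Sum>i<n. 2 * \<epsilon> * d i + 2 / \<epsilon> * (d i - g i))"
      by (rule sum.cong) auto
    also have "\<dots> = (\<Sum>i<n. 2 * \<epsilon> * d i) + (\<Sum>i<n. 2 / \<epsilon> * (d i - g i))" by (rule sum.distrib)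
    also have "\<dots> = 2 * \<epsilon> * (\<Sum>i<n. d i) + 2 / \<epsilon> * (\<Sum>i<n. d i - g i)" by (simp add: sum_distrib_left)
    finally show ?thesis by (simp add: sum_subtractf)
  qed
  also have "\<dots> \<le> 2 * \<epsilon> * (2 * D) + 2 / \<epsilon> * (\<epsilon>\<^sup>2 / 80 * D)"
    using sd dg eps by (intro add_mono mult_left_mono) auto
  also have "\<dots> = 4 * \<epsilon> * D + \<epsilon> * D / 40" using eps by (simp add: power2_eq_square field_simps)
  also have "\<dots> \<le> 5 * \<epsilon> * D" using eps D0 by (simp add: algebra_simps)
  finally have fin: "\<bar>(\<Sum>i<n. X i) - D\<bar> \<le> 5 * \<epsilon> * D" .
  show "(1 - 5 * \<epsilon>) * (\<Sum>i<n. infdist (a i) S)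
        \<le> (\<Sum>i<n. sqrt ((infdist (B *v aB i) S)\<^sup>2 + (apx i)\<^sup>2)) \<and>
      (\<Sum>i<n. sqrt ((infdist (B *v aB i) S)\<^sup>2 + (apx i)\<^sup>2))
        \<le> (1 + 5 * \<epsilon>) * (\<Sum>i<n. infdist (a i) S)"
    using fin unfolding X_def[symmetric] Y_def[symmetric] D_def[symmetric]
    by (simp add: algebra_simps abs_le_iff)
qed

end
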